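(* Let $G_1,G_2$ be finite, noncomplete, nonempty (i.e. having at least one edge), undirected, simple graphs with disjoint vertex sets, and let $n_1=|V(G_1)|$. If $G_1$ is regular, then $\vartheta(G_1\,\mathrm{NS}\,G_2)=n_1+\vartheta(G_2)$ and $\vartheta(G_1\,\mathrm{NNS}\,G_2)=n_1+\vartheta(G_2)$. If moreover $\alpha(G_2)=\vartheta(G_2)$, then $\alpha(G_1\,\mathrm{NS}\,G_2)=n_1+\alpha(G_2)$ and $\alpha(G_1\,\mathrm{NNS}\,G_2)=n_1+\alpha(G_2)$.
   Context: Let $V(G_1)=\{v_1,\dots,v_{n_1}\}$ and let $G_1\vee G_2$ be the disjoint union of $G_1,G_2$ plus all edges between $V(G_1)$ and $V(G_2)$. $G_1\,\mathrm{NS}\,G_2$ is obtained from $G_1\vee G_2$ by adding new vertices $v'_1,\dots,v'_{n_1}$ and joining $v'_i$ to $v_j$ iff $\{v_i,v_j\}\in E(G_1)$. $G_1\,\mathrm{NNS}\,G_2$ is obtained from $G_1\vee G_2$ by adding new vertices $v'_1,\dots,v'_{n_1}$ and joining $v'_i$ to $v_j$, $i\ne j$, iff $\{v_i,v_j\}\notin E(G_1)$. $\alpha$ is the independence number; $\vartheta(G)$ is the Lovász theta function: the maximum of $\mathrm{Tr}(BJ)$ over positive semidefinite $B$ indexed by $V(G)$ with $\mathrm{Tr}B=1$ and $B_{i,j}=0$ for $\{i,j\}\in E(G)$, $J$ the all-ones matrix. *)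

theory Defs
  imports Complex_Main
begin

type_synonym 'a graph = "'a set \<times> 'a set set"

definition verts :: "'a graph \<Rightarrow> 'a set" where "verts G = fst G"
definition edges :: "'a graph \<Rightarrow> 'a set set" where "edges G = snd G"

definition finite_simple_graph :: "'a graph \<Rightarrow> bool" where
  "finite_simple_graph G \<longleftrightarrow> finite (verts G) \<and>
     (\<forall>e\<in>edges G. \<exists>u v. e = {u, v} \<and> u \<noteq> v \<and> u \<in> verts G \<and> v \<in> verts G)"

definition complete_graph :: "'a graph \<Rightarrow> bool" where
  "complete_graph G \<longleftrightarrow> (\<forall>u\<in>verts G. \<forall>v\<in>verts G. u \<noteq> v \<longrightarrow> {u, v} \<in> edges G)"

definition degree :: "'a graph \<Rightarrow> 'a \<Rightarrow> nat" where
  "degree G v = card {u \<in> verts G. {u, v} \<in> edges G}"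

definition regular :: "'a graph \<Rightarrow> bool" where
  "regular G \<longleftrightarrow> (\<exists>k. \<forall>v\<in>verts G. degree G v = k)"

definition independent_set :: "'a graph \<Rightarrow> 'a set \<Rightarrow> bool" where
  "independent_set G S \<longleftrightarrow> S \<subseteq> verts G \<and> (\<forall>u\<in>S. \<forall>v\<in>S. {u, v} \<notin> edges G)"

definition alpha :: "'a graph \<Rightarrow> nat" where
  "alpha G = Max {card S | S. independent_set G S}"

definition psd_on :: "'a set \<Rightarrow> ('a \<Rightarrow> 'a \<Rightarrow> real) \<Rightarrow> bool" where
  "psd_on V B \<longleftrightarrow> (\<forall>i\<in>V. \<forall>j\<in>V. B i j = B j i) \<and>
     (\<forall>x :: 'a \<Rightarrow> real. (\<Sum>i\<in>V. \<Sum>j\<in>V. x i * B i j * x j) \<ge> 0)"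

definition theta_feasible :: "'a graph \<Rightarrow> ('a \<Rightarrow> 'a \<Rightarrow> real) \<Rightarrow> bool" where
  "theta_feasible G B \<longleftrightarrow> psd_on (verts G) B \<and> (\<Sum>i\<in>verts G. B i i) = 1 \<and>
     (\<forall>i\<in>verts G. \<forall>j\<in>verts G. {i, j} \<in> edges G \<longrightarrow> B i j = 0)"

text \<open>Tr(BJ) is the sum of all entries of B. The maximum is attained (compact
  feasible set), so it coincides with the supremum.\<close>

definition lovasz_theta :: "'a graph \<Rightarrow> real" where
  "lovasz_theta G = Sup {(\<Sum>i\<in>verts G. \<Sum>j\<in>verts G. B i j) | B. theta_feasible G B}"

definition graph_join :: "'a graph \<Rightarrow> 'a graph \<Rightarrow> 'a graph" where
  "graph_join G1 G2 = (verts G1 \<union> verts G2,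
     edges G1 \<union> edges G2 \<union> {{u, v} | u v. u \<in> verts G1 \<and> v \<in> verts G2})"

text \<open>NS and NNS: original vertices are tagged Inl, the new vertices v'_i are
  tagged Inr v_i (fresh copies of the vertices of G1).\<close>

definition graph_NS :: "'a graph \<Rightarrow> 'a graph \<Rightarrow> ('a + 'a) graph" where
  "graph_NS G1 G2 = (Inl ` verts (graph_join G1 G2) \<union> Inr ` verts G1,
     (\<lambda>e. Inl ` e) ` edges (graph_join G1 G2) \<union>
     {{Inr u, Inl v} | u v. u \<in> verts G1 \<and> v \<in> verts G1 \<and> {u, v} \<in> edges G1})"

definition graph_NNS :: "'a graph \<Rightarrow> 'a graph \<Rightarrow> ('a + 'a) graph" where
  "graph_NNS G1 G2 = (Inl ` verts (graph_join G1 G2) \<union> Inr ` verts G1,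
     (\<lambda>e. Inl ` e) ` edges (graph_join G1 G2) \<union>
     {{Inr u, Inl v} | u v. u \<in> verts G1 \<and> v \<in> verts G1 \<and> u \<noteq> v \<and> {u, v} \<notin> edges G1})"

end

theory Submission
  imports Defs
begin



definition Bil :: "'v set \<Rightarrow> ('v \<Rightarrow> 'v \<Rightarrow> real) \<Rightarrow> ('v \<Rightarrow> real) \<Rightarrow> ('v \<Rightarrow> real) \<Rightarrow> real" where
  "Bil V B x y = (\<Sum>i\<in>V. \<Sum>j\<in>V. x i * B i j * y j)"

definition dlt :: "'v \<Rightarrow> 'v \<Rightarrow> real" where "dlt a = (\<lambda>i. if i = a then 1 else 0)"

lemma psd_Bil: "psd_on V B \<Longrightarrow> Bil V B x x \<ge> 0"
  by (simp add: psd_on_def Bil_def)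

lemma Bil_sym: assumes "psd_on V B" shows "Bil V B x y = Bil V B y x"
proof -
  have s: "\<And>i j. i \<in> V \<Longrightarrow> j \<in> V \<Longrightarrow> B i j = B j i" using assms by (simp add: psd_on_def)
  have "Bil V B x y = (\<Sum>j\<in>V. \<Sum>i\<in>V. x i * B i j * y j)" unfolding Bil_def by (rule sum.swap)
  also have "\<dots> = Bil V B y x" unfolding Bil_def
    by (intro sum.cong refl) (simp add: s mult.commute mult.left_commute)
  finally show ?thesis .
qed

lemma Bil_lin_left: "Bil V B (\<lambda>i. a * x i + b * y i) z = a * Bil V B x z + b * Bil V B y z"
  by (simp add: Bil_def algebra_simps sum.distrib sum_distrib_left)

lemma Bil_lin_right: "Bil V B z (\<lambda>i. a * x i + b * y i) = a * Bil V B z x + b * Bil V B z y"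
  by (simp add: Bil_def algebra_simps sum.distrib sum_distrib_left)

lemma Bil_quad: assumes "psd_on V B"
  shows "Bil V B (\<lambda>i. a * x i + b * y i) (\<lambda>i. a * x i + b * y i)
     = a^2 * Bil V B x x + 2 * a * b * Bil V B x y + b^2 * Bil V B y y"
  using Bil_sym[OF assms, of y x]
  by (simp add: Bil_lin_left Bil_lin_right power2_eq_square algebra_simps)

lemma Bil_le: assumes "psd_on V B" shows "2 * Bil V B x y \<le> Bil V B x x + Bil V B y y"
proof -
  have "0 \<le> Bil V B (\<lambda>i. 1 * x i + (-1) * y i) (\<lambda>i. 1 * x i + (-1) * y i)"
    by (rule psd_Bil[OF assms])
  then show ?thesis unfolding Bil_quad[OF assms] by simp
qed

lemma Bil_CS: assumes "psd_on V B" shows "(Bil V B x y)^2 \<le> Bil V B x x * Bil V B y y"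
proof (cases "Bil V B y y = 0")
  case True
  have "Bil V B x y = 0"
  proof (rule ccontr)
    assume ne: "Bil V B x y \<noteq> 0"
    define l where "l = - (Bil V B x x + 1) / (2 * Bil V B x y)"
    have "0 \<le> Bil V B (\<lambda>i. 1 * x i + l * y i) (\<lambda>i. 1 * x i + l * y i)" by (rule psd_Bil[OF assms])
    also have "\<dots> = Bil V B x x + 2 * l * Bil V B x y" unfolding Bil_quad[OF assms] using True by simp
    also have "2 * l * Bil V B x y = - (Bil V B x x + 1)" unfolding l_def using ne by (simp add: field_simps)
    finally show False by simp
  qed
  then show ?thesis using True by simp
next
  case False
  then have pos: "Bil V B y y > 0" using psd_Bil[OF assms, of y] by simp
  define l where "l = - Bil V B x y / Bil V B y y"
  have "0 \<le> Bil V B (\<lambda>i. 1 * x i + l * y i) (\<lambda>i. 1 * x i + l * y i)" by (rule psd_Bil[OF assms])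
  also have "\<dots> = Bil V B x x + 2 * l * Bil V B x y + l^2 * Bil V B y y" unfolding Bil_quad[OF assms] by simp
  also have "\<dots> = Bil V B x x - (Bil V B x y)^2 / Bil V B y y" unfolding l_def using pos
    by (simp add: field_simps power2_eq_square)
  finally have "(Bil V B x y)^2 / Bil V B y y \<le> Bil V B x x" by simp
  then show ?thesis using pos by (simp add: divide_le_eq mult.commute)
qed

lemma Bil_sum_left: assumes "finite E"
  shows "Bil V B (\<lambda>i. \<Sum>e\<in>E. f e i) y = (\<Sum>e\<in>E. Bil V B (f e) y)"
proof -
  have "Bil V B (\<lambda>i. \<Sum>e\<in>E. f e i) y = (\<Sum>i\<in>V. \<Sum>j\<in>V. \<Sum>e\<in>E. f e i * B i j * y j)"
    by (simp add: Bil_def sum_distrib_right)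
  also have "\<dots> = (\<Sum>i\<in>V. \<Sum>e\<in>E. \<Sum>j\<in>V. f e i * B i j * y j)"
    by (rule sum.cong[OF refl], rule sum.swap)
  also have "\<dots> = (\<Sum>e\<in>E. \<Sum>i\<in>V. \<Sum>j\<in>V. f e i * B i j * y j)"
    by (rule sum.swap)
  finally show ?thesis unfolding Bil_def .
qed

lemma Bil_sum_right: assumes "finite E"
  shows "Bil V B x (\<lambda>i. \<Sum>e\<in>E. f e i) = (\<Sum>e\<in>E. Bil V B x (f e))"
proof -
  have "Bil V B x (\<lambda>i. \<Sum>e\<in>E. f e i) = (\<Sum>i\<in>V. \<Sum>j\<in>V. \<Sum>e\<in>E. x i * B i j * f e j)"
    by (simp add: Bil_def sum_distrib_left)
  also have "\<dots> = (\<Sum>i\<in>V. \<Sum>e\<in>E. \<Sum>j\<in>V. x i * B i j * f e j)"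
    by (rule sum.cong[OF refl], rule sum.swap)
  also have "\<dots> = (\<Sum>e\<in>E. \<Sum>i\<in>V. \<Sum>j\<in>V. x i * B i j * f e j)"
    by (rule sum.swap)
  finally show ?thesis unfolding Bil_def .
qed

lemma Bil_sum: assumes "finite E"
  shows "Bil V B (\<lambda>i. \<Sum>e\<in>E. f e i) (\<lambda>j. \<Sum>e'\<in>E. g e' j) = (\<Sum>e\<in>E. \<Sum>e'\<in>E. Bil V B (f e) (g e'))"
  using assms by (simp add: Bil_sum_left Bil_sum_right)

lemma Bil_convex: assumes "psd_on V B" "finite E"
  shows "Bil V B (\<lambda>i. \<Sum>e\<in>E. f e i) (\<lambda>j. \<Sum>e\<in>E. f e j) \<le> real (card E) * (\<Sum>e\<in>E. Bil V B (f e) (f e))"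
proof -
  have "Bil V B (\<lambda>i. \<Sum>e\<in>E. f e i) (\<lambda>j. \<Sum>e\<in>E. f e j) = (\<Sum>e\<in>E. \<Sum>e'\<in>E. Bil V B (f e) (f e'))"
    by (rule Bil_sum[OF assms(2)])
  also have "\<dots> \<le> (\<Sum>e\<in>E. \<Sum>e'\<in>E. (Bil V B (f e) (f e) + Bil V B (f e') (f e')) / 2)"
    apply (intro sum_mono) using Bil_le[OF assms(1)] by (simp add: field_simps)
  also have "\<dots> = real (card E) * (\<Sum>e\<in>E. Bil V B (f e) (f e))"
    by (simp add: sum.distrib add_divide_distrib sum_divide_distrib[symmetric] sum_distrib_left[symmetric])
  finally show ?thesis .
qed

lemma Bil_dlt: assumes "finite V" "a \<in> V" "b \<in> V" shows "Bil V B (dlt a) (dlt b) = B a b"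
proof -
  have "\<And>i j. dlt a i * B i j * dlt b j = (if i = a then (if j = b then B a b else 0) else 0)"
    by (simp add: dlt_def)
  then show ?thesis using assms unfolding Bil_def by (simp add: sum.If_cases)
qed

lemma Bil_restrict: assumes "finite V" "S \<subseteq> V" "\<And>i. i \<notin> S \<Longrightarrow> x i = 0" "\<And>i. i \<notin> S \<Longrightarrow> y i = 0"
  shows "Bil V B x y = Bil S B x y"
proof -
  have "Bil V B x y = (\<Sum>i\<in>S. \<Sum>j\<in>V. x i * B i j * y j)"
    unfolding Bil_def by (rule sum.mono_neutral_right) (use assms in \<open>auto intro: finite_subset\<close>)
  also have "\<dots> = Bil S B x y" unfolding Bil_def
    by (intro sum.cong refl sum.mono_neutral_right) (use assms in \<open>auto intro: finite_subset\<close>)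
  finally show ?thesis .
qed

lemma psd_diag: assumes "psd_on V B" "finite V" "i \<in> V" shows "B i i \<ge> 0"
  using psd_Bil[OF assms(1), of "dlt i"] Bil_dlt[OF assms(2,3,3)] by simp

lemma psd_bound: assumes "psd_on V B" "finite V" "S \<subseteq> V"
  shows "(\<Sum>i\<in>S. \<Sum>j\<in>S. B i j) \<le> real (card S) * (\<Sum>i\<in>S. B i i)"
proof -
  have "(\<Sum>i\<in>S. \<Sum>j\<in>S. B i j) \<le> (\<Sum>i\<in>S. \<Sum>j\<in>S. (B i i + B j j) / 2)"
  proof (intro sum_mono)
    fix i j assume "i \<in> S" "j \<in> S"
    then have "i \<in> V" "j \<in> V" using assms by auto
    from Bil_le[OF assms(1), of "dlt i" "dlt j"] show "B i j \<le> (B i i + B j j) / 2"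
      using Bil_dlt[OF assms(2)] \<open>i \<in> V\<close> \<open>j \<in> V\<close> by simp
  qed
  also have "\<dots> = real (card S) * (\<Sum>i\<in>S. B i i)"
    by (simp add: sum.distrib add_divide_distrib sum_divide_distrib[symmetric] sum_distrib_left[symmetric])
  finally show ?thesis .
qed




lemma simple_edge: "finite_simple_graph G \<Longrightarrow> e \<in> edges G \<Longrightarrow> \<exists>u v. e = {u, v} \<and> u \<noteq> v \<and> u \<in> verts G \<and> v \<in> verts G"
  by (simp add: finite_simple_graph_def)

lemma simple_noloop: "finite_simple_graph G \<Longrightarrow> {u, u} \<notin> edges G"
  unfolding finite_simple_graph_def by (metis doubleton_eq_iff insert_absorb2)

lemma simple_edge_in: "finite_simple_graph G \<Longrightarrow> {u, v} \<in> edges G \<Longrightarrow> u \<in> verts G \<and> v \<in> verts G"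
  unfolding finite_simple_graph_def by (metis doubleton_eq_iff)

lemma feasible_bound: assumes "finite (verts K)" "theta_feasible K B"
  shows "(\<Sum>i\<in>verts K. \<Sum>j\<in>verts K. B i j) \<le> real (card (verts K))"
  using psd_bound[of "verts K" B "verts K"] assms unfolding theta_feasible_def by simp

lemma theta_bdd: assumes "finite (verts K)"
  shows "bdd_above {(\<Sum>i\<in>verts K. \<Sum>j\<in>verts K. B i j) | B. theta_feasible K B}"
  unfolding bdd_above_def using feasible_bound[OF assms] by blast

lemma theta_upper: assumes "finite (verts K)" "theta_feasible K B"
  shows "(\<Sum>i\<in>verts K. \<Sum>j\<in>verts K. B i j) \<le> lovasz_theta K"
  unfolding lovasz_theta_def by (rule cSup_upper) (use assms theta_bdd[OF assms(1)] in auto)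

lemma theta_ge1: assumes "finite_simple_graph K" "verts K \<noteq> {}"
  shows "1 \<le> lovasz_theta K"
proof -
  obtain v where v: "v \<in> verts K" using assms(2) by auto
  define B where "B = (\<lambda>i j. if i = v \<and> j = v then 1 else (0::real))"
  have fin: "finite (verts K)" using assms(1) by (simp add: finite_simple_graph_def)
  have q: "(\<Sum>i\<in>verts K. \<Sum>j\<in>verts K. x i * B i j * x j) = x v * x v" for x
  proof -
    have "\<And>i j. x i * B i j * x j = (if i = v then (if j = v then x v * x v else 0) else 0)"
      by (simp add: B_def)
    then show ?thesis using v fin by (simp add: sum.If_cases)
  qed
  have "theta_feasible K B"
    unfolding theta_feasible_def psd_on_def
  proof (intro conjI ballI allI impI)
    show "(\<Sum>i\<in>verts K. B i i) = 1" using v fin by (simp add: B_def sum.If_cases)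
    fix x show "0 \<le> (\<Sum>i\<in>verts K. \<Sum>j\<in>verts K. x i * B i j * x j)" unfolding q by simp
  next
    fix i j assume "i \<in> verts K" "j \<in> verts K" "{i, j} \<in> edges K"
    then show "B i j = 0" using simple_noloop[OF assms(1)] by (auto simp: B_def)
  qed (auto simp: B_def)
  moreover have "(\<Sum>i\<in>verts K. \<Sum>j\<in>verts K. B i j) = 1"
    using q[of "\<lambda>_. 1"] by simp
  ultimately show ?thesis using theta_upper[OF fin] by fastforce
qed

locale nsetup =
  fixes G1 G2 :: "'a graph" and H :: "('a + 'a) graph" and X :: "('a + 'a) set set"
    and N :: "'a \<Rightarrow> 'a set" and k :: nat
  assumes fs1: "finite_simple_graph G1" and fs2: "finite_simple_graph G2"
    and disj: "verts G1 \<inter> verts G2 = {}"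
    and vH: "verts H = Inl ` (verts G1 \<union> verts G2) \<union> Inr ` verts G1"
    and eH: "edges H = (\<lambda>e. Inl ` e) ` edges (graph_join G1 G2) \<union> X"
    and Xsub: "X \<subseteq> {{Inr u, Inl v} | u v. u \<in> verts G1 \<and> v \<in> verts G1}"
    and Nsub: "\<And>i. i \<in> verts G1 \<Longrightarrow> N i \<subseteq> verts G1"
    and Ncard: "\<And>i. i \<in> verts G1 \<Longrightarrow> card (N i) = k"
    and Nsym: "\<And>i j. i \<in> verts G1 \<Longrightarrow> j \<in> verts G1 \<Longrightarrow> j \<in> N i \<longleftrightarrow> i \<in> N j"
    and NX: "\<And>i j. i \<in> verts G1 \<Longrightarrow> j \<in> N i \<Longrightarrow> {Inr j, Inl i} \<in> X"
    and kpos: "k > 0"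
    and ne1: "verts G1 \<noteq> {}" and ne2: "verts G2 \<noteq> {}"
begin

abbreviation "V1 \<equiv> verts G1"
abbreviation "V2 \<equiv> verts G2"
abbreviation "W \<equiv> verts H"
abbreviation "n1 \<equiv> card V1"
abbreviation "th2 \<equiv> lovasz_theta G2"

lemma fin1: "finite V1" using fs1 by (simp add: finite_simple_graph_def)
lemma fin2: "finite V2" using fs2 by (simp add: finite_simple_graph_def)
lemma finW: "finite W" using fin1 fin2 vH by simp
lemma n1pos: "n1 > 0" using fin1 ne1 by (simp add: card_gt_0_iff)
lemma notV2[simp]: "v \<in> V1 \<Longrightarrow> v \<notin> V2" using disj by blast

lemma sum_W: "(\<Sum>w\<in>W. g w) = (\<Sum>v\<in>V1. g (Inl v)) + (\<Sum>v\<in>V2. g (Inl v)) + (\<Sum>i\<in>V1. g (Inr i))"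
proof -
  have Weq: "W = (Inl ` V1 \<union> Inl ` V2) \<union> Inr ` V1" using vH by auto
  have "(\<Sum>w\<in>W. g w) = (\<Sum>w\<in>Inl ` V1 \<union> Inl ` V2. g w) + (\<Sum>w\<in>Inr ` V1. g w)"
    unfolding Weq by (rule sum.union_disjoint) (use fin1 fin2 in auto)
  also have "(\<Sum>w\<in>Inl ` V1 \<union> Inl ` V2. g w) = (\<Sum>w\<in>Inl ` V1. g w) + (\<Sum>w\<in>Inl ` V2. g w)"
    using fin1 fin2 disj by (intro sum.union_disjoint) auto
  finally show ?thesis using fin1 fin2 by (simp add: sum.reindex)
qed

lemma notX_LL: "{Inl u, Inl v} \<notin> X"
proof
  assume h: "{Inl u, Inl v} \<in> X"
  have "{Inl u, Inl v} \<in> {{Inr u, Inl v} | u v. u \<in> V1 \<and> v \<in> V1}" by (rule subsetD[OF Xsub h])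
  then obtain a b where "{Inl u, Inl v} = {Inr a, Inl b}" by blast
  then show False by (simp add: doubleton_eq_iff)
qed

lemma edge_LL: assumes "{Inl u, Inl v} \<in> edges H" "u \<in> V2" "v \<in> V2" shows "{u, v} \<in> edges G2"
proof -
  have "{Inl u, Inl v::'a+'a} \<in> (\<lambda>e. Inl ` e) ` edges (graph_join G1 G2) \<or> {Inl u, Inl v} \<in> X"
    using assms(1) unfolding eH by (simp only: Un_iff)
  then have "{Inl u, Inl v::'a+'a} \<in> (\<lambda>e. Inl ` e) ` edges (graph_join G1 G2)"
    using notX_LL by (simp only: simp_thms)
  then obtain e where e: "e \<in> edges (graph_join G1 G2)" "{Inl u, Inl v::'a+'a} = Inl ` e" by (rule imageE)
  have "(Inl ` {u, v} :: ('a+'a) set) = Inl ` e" using e(2) by simp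
  then have "{u, v} = e" by (rule inj_image_eq_iff[OF inj_Inl, THEN iffD1])
  then have "e = {u, v}" by simp
  with e(1) have "{u, v} \<in> edges G1 \<or> {u, v} \<in> edges G2 \<or> (\<exists>a b. {u,v} = {a, b} \<and> a \<in> V1 \<and> b \<in> V2)"
    by (simp add: graph_join_def edges_def verts_def)
  moreover have "{u, v} \<notin> edges G1" using simple_edge_in[OF fs1, of u v] assms(2) by auto
  moreover have "\<not> (\<exists>a b. {u,v} = {a, b} \<and> a \<in> V1 \<and> b \<in> V2)"
  proof
    assume "\<exists>a b. {u,v} = {a, b} \<and> a \<in> V1 \<and> b \<in> V2"
    then obtain a b where "{u,v} = {a, b}" "a \<in> V1" by blast
    then have "a = u \<or> a = v" by (simp add: doubleton_eq_iff) blast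
    then show False using \<open>a \<in> V1\<close> assms(2,3) by auto
  qed
  ultimately show ?thesis by blast
qed

lemma edge_Inr: assumes "{Inr i, w} \<in> edges H" shows "\<exists>v\<in>V1. w = Inl v"
proof -
  have "{Inr i, w} \<in> (\<lambda>e. Inl ` e) ` edges (graph_join G1 G2) \<or> {Inr i, w} \<in> X"
    using assms(1) unfolding eH by (simp only: Un_iff)
  moreover have "{Inr i, w} \<notin> (\<lambda>e. Inl ` e) ` edges (graph_join G1 G2)"
  proof
    assume "{Inr i, w} \<in> (\<lambda>e. Inl ` e) ` edges (graph_join G1 G2)"
    then obtain e where "{Inr i, w} = Inl ` e" by (rule imageE)
    then have "Inr i \<in> Inl ` e" by (metis insertI1)
    then show False by auto
  qed
  ultimately have "{Inr i, w} \<in> X" by blast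
  then have "{Inr i, w} \<in> {{Inr u, Inl v} | u v. u \<in> V1 \<and> v \<in> V1}" by (rule subsetD[OF Xsub])
  then obtain a b where ab: "{Inr i, w} = {Inr a, Inl b}" "b \<in> V1" by blast
  then have "w = Inl b" by (simp add: doubleton_eq_iff) 
  then show ?thesis using ab(2) by blast
qed

lemma edge_RR: "{Inr i, Inr j} \<notin> edges H"
  using edge_Inr by blast

end



context nsetup begin

lemma N_swap: "(\<Sum>i\<in>V1. \<Sum>j\<in>N i. g i j) = (\<Sum>j\<in>V1. \<Sum>i\<in>N j. g i j)"
proof -
  have eq: "\<And>i. i \<in> V1 \<Longrightarrow> N i = {j \<in> V1. j \<in> N i}" using Nsub by auto
  have "(\<Sum>i\<in>V1. \<Sum>j\<in>N i. g i j) = (\<Sum>i\<in>V1. \<Sum>j\<in>{j \<in> V1. j \<in> N i}. g i j)"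
    by (rule sum.cong[OF refl]) (use eq in auto)
  also have "\<dots> = (\<Sum>j\<in>V1. \<Sum>i\<in>{i \<in> V1. j \<in> N i}. g i j)"
    by (rule sum.swap_restrict) (use fin1 in auto)
  also have "\<dots> = (\<Sum>j\<in>V1. \<Sum>i\<in>N j. g i j)"
  proof (rule sum.cong[OF refl])
    fix j assume j: "j \<in> V1"
    have "{i \<in> V1. j \<in> N i} = N j" using Nsym[OF _ j] Nsub[OF j] by auto
    then show "(\<Sum>i\<in>{i \<in> V1. j \<in> N i}. g i j) = (\<Sum>i\<in>N j. g i j)" by simp
  qed
  finally show ?thesis .
qed

lemma finN: "i \<in> V1 \<Longrightarrow> finite (N i)" using Nsub fin1 finite_subset by blast

lemma N_sum_const_left: "(\<Sum>i\<in>V1. \<Sum>j\<in>N i. h i) = real k * (\<Sum>i\<in>V1. h i)"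
  by (simp add: Ncard sum_distrib_left cong: sum.cong)

lemma N_sum_const_right: "(\<Sum>i\<in>V1. \<Sum>j\<in>N i. h j) = real k * (\<Sum>j\<in>V1. h j)"
  using N_swap[of "\<lambda>i j. h j"] N_sum_const_left[of h] by simp

definition pv :: "('a + 'a) \<Rightarrow> real" where
  "pv w = (case w of Inl u \<Rightarrow> if u \<in> V1 then 1 else 0 | Inr u \<Rightarrow> if u \<in> V1 then 1 else 0)"

definition zv :: "('a + 'a) \<Rightarrow> real" where
  "zv w = (case w of Inl u \<Rightarrow> if u \<in> V2 then 1 else 0 | Inr u \<Rightarrow> 0)"

lemma Qp: assumes feas: "theta_feasible H B"
  shows "Bil W B pv pv \<le> real n1 * ((\<Sum>i\<in>V1. B (Inl i) (Inl i)) + (\<Sum>j\<in>V1. B (Inr j) (Inr j)))"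
proof -
  have psd: "psd_on W B" using feas by (simp add: theta_feasible_def)
  have zero: "B (Inl i) (Inr j) = 0" if "i \<in> V1" "j \<in> N i" for i j
  proof -
    have "{Inr j, Inl i} \<in> edges H" using NX[OF that] eH by auto
    then have "{Inl i, Inr j} \<in> edges H" by (simp add: insert_commute)
    moreover have "Inl i \<in> W" "Inr j \<in> W" using that Nsub[OF that(1)] vH by auto
    ultimately show ?thesis using feas by (simp add: theta_feasible_def)
  qed
  define E where "E = Sigma V1 N"
  define f where "f e = (\<lambda>w::'a+'a. 1 * dlt (Inl (fst e)) w + 1 * dlt (Inr (snd e)) w)" for e :: "'a \<times> 'a"
  have finE: "finite E" unfolding E_def using fin1 finN by auto
  have cardE: "card E = n1 * k" unfolding E_def using fin1 finN
    by (simp add: Ncard)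
  have sumf: "(\<lambda>w. \<Sum>e\<in>E. f e w) = (\<lambda>w. real k * pv w)"
  proof
    fix w
    have "(\<Sum>e\<in>E. f e w) = (\<Sum>i\<in>V1. \<Sum>j\<in>N i. (dlt (Inl i) w + dlt (Inr j) w))"
      unfolding E_def f_def using fin1 finN by (simp add: sum.Sigma case_prod_unfold)
    also have "\<dots> = real k * (\<Sum>i\<in>V1. dlt (Inl i) w) + real k * (\<Sum>j\<in>V1. dlt (Inr j) w)"
      by (simp add: sum.distrib N_sum_const_right Ncard sum_distrib_left)
    also have "\<dots> = real k * pv w"
      using fin1 by (cases w) (auto simp: dlt_def pv_def sum.If_cases)
    finally show "(\<Sum>e\<in>E. f e w) = real k * pv w" .
  qed
  have Qf: "Bil W B (f e) (f e) = B (Inl (fst e)) (Inl (fst e)) + B (Inr (snd e)) (Inr (snd e))"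
    if "e \<in> E" for e
  proof -
    have i: "fst e \<in> V1" and j: "snd e \<in> N (fst e)" using that unfolding E_def by auto
    have "snd e \<in> V1" using j Nsub[OF i] by auto
    then have mem: "Inl (fst e) \<in> W" "Inr (snd e) \<in> W" using i vH by auto
    show ?thesis unfolding f_def Bil_quad[OF psd] using Bil_dlt[OF finW] mem zero[OF i j] by simp
  qed
  have "real k ^ 2 * Bil W B pv pv = Bil W B (\<lambda>w. real k * pv w + 0 * pv w) (\<lambda>w. real k * pv w + 0 * pv w)"
    unfolding Bil_quad[OF psd] by simp
  also have "\<dots> = Bil W B (\<lambda>w. \<Sum>e\<in>E. f e w) (\<lambda>w. \<Sum>e\<in>E. f e w)" using sumf by simp
  also have "\<dots> \<le> real (card E) * (\<Sum>e\<in>E. Bil W B (f e) (f e))" by (rule Bil_convex[OF psd finE])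
  also have "(\<Sum>e\<in>E. Bil W B (f e) (f e)) = (\<Sum>e\<in>E. B (Inl (fst e)) (Inl (fst e)) + B (Inr (snd e)) (Inr (snd e)))"
    using Qf by simp
  also have "\<dots> = (\<Sum>i\<in>V1. \<Sum>j\<in>N i. B (Inl i) (Inl i) + B (Inr j) (Inr j))"
    unfolding E_def using fin1 finN by (simp add: sum.Sigma case_prod_unfold)
  also have "\<dots> = real k * ((\<Sum>i\<in>V1. B (Inl i) (Inl i)) + (\<Sum>j\<in>V1. B (Inr j) (Inr j)))"
    by (simp add: sum.distrib N_sum_const_right Ncard sum_distrib_left algebra_simps)
  finally have "real k ^ 2 * Bil W B pv pv \<le> real k ^ 2 * (real n1 * ((\<Sum>i\<in>V1. B (Inl i) (Inl i)) + (\<Sum>j\<in>V1. B (Inr j) (Inr j))))"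
    unfolding cardE by (simp add: power2_eq_square algebra_simps)
  then show ?thesis using kpos by simp
qed

end



lemma Bil_cong: "(\<And>i. i \<in> V \<Longrightarrow> x i = x' i) \<Longrightarrow> (\<And>i. i \<in> V \<Longrightarrow> y i = y' i) \<Longrightarrow> Bil V B x y = Bil V B x' y'"
  unfolding Bil_def by (intro sum.cong refl) auto

lemma Bil_split: assumes "psd_on V B" "l > 0"
  shows "Bil V B (\<lambda>i. 1 * x i + 1 * y i) (\<lambda>i. 1 * x i + 1 * y i) \<le> (1 + l) * Bil V B x x + (1 + 1 / l) * Bil V B y y"
proof -
  have "0 \<le> Bil V B (\<lambda>i. l * x i + (-1) * y i) (\<lambda>i. l * x i + (-1) * y i)" by (rule psd_Bil[OF assms(1)])
  then have h: "2 * l * Bil V B x y \<le> l^2 * Bil V B x x + Bil V B y y" unfolding Bil_quad[OF assms(1)] by simp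
  have "2 * Bil V B x y \<le> l * Bil V B x x + (1 / l) * Bil V B y y"
  proof -
    have "l * (2 * Bil V B x y) \<le> l * (l * Bil V B x x + (1 / l) * Bil V B y y)"
      using h assms(2) by (simp add: algebra_simps power2_eq_square)
    then show ?thesis using assms(2) by (simp only: mult_le_cancel_left_pos)
  qed
  then show ?thesis unfolding Bil_quad[OF assms(1)] by (simp add: algebra_simps)
qed

lemma psd_scale: "psd_on V B \<Longrightarrow> c \<ge> 0 \<Longrightarrow> psd_on V (\<lambda>i j. c * B i j)"
  unfolding psd_on_def
proof (intro conjI ballI allI)
  fix x assume a: "(\<forall>i\<in>V. \<forall>j\<in>V. B i j = B j i) \<and> (\<forall>x. 0 \<le> (\<Sum>i\<in>V. \<Sum>j\<in>V. x i * B i j * x j))" "c \<ge> 0"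
  have "(\<Sum>i\<in>V. \<Sum>j\<in>V. x i * (c * B i j) * x j) = c * (\<Sum>i\<in>V. \<Sum>j\<in>V. x i * B i j * x j)"
    by (simp add: sum_distrib_left algebra_simps)
  then show "0 \<le> (\<Sum>i\<in>V. \<Sum>j\<in>V. x i * (c * B i j) * x j)" using a by simp
qed auto

context nsetup begin

definition ext :: "('a \<Rightarrow> real) \<Rightarrow> ('a + 'a) \<Rightarrow> real" where
  "ext xx w = (case w of Inl u \<Rightarrow> if u \<in> V2 then xx u else 0 | Inr u \<Rightarrow> 0)"

lemma Bil_ext: "Bil W B (ext xx) (ext yy) = (\<Sum>u\<in>V2. \<Sum>v\<in>V2. xx u * B (Inl u) (Inl v) * yy v)"
  unfolding Bil_def by (simp add: sum_W ext_def cong: sum.cong)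

lemma zv_ext: "zv = ext (\<lambda>_. 1)"
  by (rule ext) (simp add: zv_def ext_def split: sum.split)

lemma psd_V2: assumes "psd_on W B" shows "psd_on V2 (\<lambda>u v. B (Inl u) (Inl v))"
  unfolding psd_on_def
proof (intro conjI ballI allI)
  fix x show "0 \<le> (\<Sum>i\<in>V2. \<Sum>j\<in>V2. x i * B (Inl i) (Inl j) * x j)"
    using psd_Bil[OF assms, of "ext x"] Bil_ext by simp
next
  fix i j assume "i \<in> V2" "j \<in> V2" then show "B (Inl i) (Inl j) = B (Inl j) (Inl i)"
    using assms vH by (simp add: psd_on_def)
qed

lemma Qz: assumes feas: "theta_feasible H B"
  shows "Bil W B zv zv \<le> (\<Sum>v\<in>V2. B (Inl v) (Inl v)) * th2"
proof -
  have psd: "psd_on W B" using feas by (simp add: theta_feasible_def)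
  define b where "b = (\<Sum>v\<in>V2. B (Inl v) (Inl v))"
  have bnn: "b \<ge> 0" unfolding b_def
    by (rule sum_nonneg) (use psd_diag[OF psd finW] vH in auto)
  have Qz: "Bil W B zv zv = (\<Sum>u\<in>V2. \<Sum>v\<in>V2. B (Inl u) (Inl v))"
    unfolding zv_ext Bil_ext by simp
  show ?thesis
  proof (cases "b = 0")
    case True
    have "(\<Sum>u\<in>V2. \<Sum>v\<in>V2. B (Inl u) (Inl v)) \<le> real (card V2) * b"
      unfolding b_def by (rule psd_bound[OF psd_V2[OF psd] fin2]) simp
    then show ?thesis using True Qz b_def by simp
  next
    case False
    then have bpos: "b > 0" using bnn by simp
    define B2 where "B2 u v = (1 / b) * B (Inl u) (Inl v)" for u v
    have "theta_feasible G2 B2"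
      unfolding theta_feasible_def
    proof (intro conjI ballI impI)
      show "psd_on V2 B2" unfolding B2_def by (rule psd_scale[OF psd_V2[OF psd]]) (use bpos in simp)
      show "(\<Sum>i\<in>V2. B2 i i) = 1" unfolding B2_def using bpos
        by (simp add: sum_divide_distrib[symmetric] b_def[symmetric])
      fix i j assume ij: "i \<in> V2" "j \<in> V2" "{i, j} \<in> edges G2"
      have "{Inl i, Inl j} \<in> edges H"
      proof -
        have "{i, j} \<in> edges (graph_join G1 G2)" using ij by (simp add: graph_join_def edges_def)
        then have "(Inl ` {i, j} :: ('a+'a) set) \<in> (\<lambda>e. Inl ` e) ` edges (graph_join G1 G2)" by blast
        then show ?thesis using eH by simp
      qed
      moreover have "Inl i \<in> W" "Inl j \<in> W" using ij vH by auto
      ultimately show "B2 i j = 0" using feas unfolding B2_def theta_feasible_def by simp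
    qed
    then have "(\<Sum>u\<in>V2. \<Sum>v\<in>V2. B2 u v) \<le> th2" by (rule theta_upper[OF fin2])
    moreover have "(\<Sum>u\<in>V2. \<Sum>v\<in>V2. B2 u v) = (1 / b) * (\<Sum>u\<in>V2. \<Sum>v\<in>V2. B (Inl u) (Inl v))"
      unfolding B2_def by (simp add: sum_distrib_left)
    ultimately show ?thesis using Qz bpos b_def by (simp add: field_simps)
  qed
qed

lemma UB: assumes feas: "theta_feasible H B"
  shows "(\<Sum>i\<in>W. \<Sum>j\<in>W. B i j) \<le> real n1 + th2"
proof -
  have psd: "psd_on W B" using feas by (simp add: theta_feasible_def)
  have th2: "th2 \<ge> 1" by (rule theta_ge1[OF fs2 ne2])
  define l where "l = th2 / real n1"
  have lpos: "l > 0" unfolding l_def using th2 n1pos by simp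
  define s where "s = (\<Sum>i\<in>V1. B (Inl i) (Inl i)) + (\<Sum>j\<in>V1. B (Inr j) (Inr j))"
  define b where "b = (\<Sum>v\<in>V2. B (Inl v) (Inl v))"
  have tr: "s + b = 1" using feas unfolding theta_feasible_def s_def b_def sum_W by simp
  have "(\<Sum>i\<in>W. \<Sum>j\<in>W. B i j) = Bil W B (\<lambda>_. 1) (\<lambda>_. 1)" by (simp add: Bil_def)
  also have "\<dots> = Bil W B (\<lambda>w. 1 * pv w + 1 * zv w) (\<lambda>w. 1 * pv w + 1 * zv w)"
    by (rule Bil_cong) (use vH in \<open>auto simp: pv_def zv_def\<close>)
  also have "\<dots> \<le> (1 + l) * Bil W B pv pv + (1 + 1 / l) * Bil W B zv zv" by (rule Bil_split[OF psd lpos])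
  also have "\<dots> \<le> (1 + l) * (real n1 * s) + (1 + 1 / l) * (b * th2)"
    apply (intro add_mono mult_left_mono)
    using Qp[OF feas] Qz[OF feas] lpos unfolding s_def b_def by auto
  also have "\<dots> = (real n1 + th2) * (s + b)" unfolding l_def using n1pos th2 by (simp add: field_simps)
  finally show ?thesis using tr by simp
qed

end



lemma exists_feasible: assumes "finite_simple_graph K" "verts K \<noteq> {}"
  shows "\<exists>B. theta_feasible K B"
proof -
  obtain v where v: "v \<in> verts K" using assms(2) by auto
  define B where "B = (\<lambda>i j. if i = v \<and> j = v then 1 else (0::real))"
  have fin: "finite (verts K)" using assms(1) by (simp add: finite_simple_graph_def)
  have q: "(\<Sum>i\<in>verts K. \<Sum>j\<in>verts K. x i * B i j * x j) = x v * x v" for x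
  proof -
    have "\<And>i j. x i * B i j * x j = (if i = v then (if j = v then x v * x v else 0) else 0)"
      by (simp add: B_def)
    then show ?thesis using v fin by (simp add: sum.If_cases)
  qed
  have "theta_feasible K B"
    unfolding theta_feasible_def psd_on_def
  proof (intro conjI ballI allI impI)
    show "(\<Sum>i\<in>verts K. B i i) = 1" using v fin by (simp add: B_def sum.If_cases)
    fix x show "0 \<le> (\<Sum>i\<in>verts K. \<Sum>j\<in>verts K. x i * B i j * x j)" unfolding q by simp
  next
    fix i j assume "i \<in> verts K" "j \<in> verts K" "{i, j} \<in> edges K"
    then show "B i j = 0" using simple_noloop[OF assms(1)] by (auto simp: B_def)
  qed (auto simp: B_def)
  then show ?thesis by blast
qed

context nsetup begin

definition rr :: "('a \<Rightarrow> 'a \<Rightarrow> real) \<Rightarrow> 'a \<Rightarrow> real" where "rr B1 v = (\<Sum>w\<in>V2. B1 v w)"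

definition Bc :: "('a \<Rightarrow> 'a \<Rightarrow> real) \<Rightarrow> real \<Rightarrow> ('a + 'a) \<Rightarrow> ('a + 'a) \<Rightarrow> real" where
  "Bc B1 t w w' = (1 / (real n1 + t)) * (case w of
      Inl u \<Rightarrow> (case w' of Inl v \<Rightarrow> if u \<in> V2 \<and> v \<in> V2 then t * B1 u v else 0
                         | Inr j \<Rightarrow> if u \<in> V2 then rr B1 u else 0)
    | Inr i \<Rightarrow> (case w' of Inl v \<Rightarrow> if v \<in> V2 then rr B1 v else 0 | Inr j \<Rightarrow> 1))"

lemma QBc: "(\<Sum>w\<in>W. \<Sum>w'\<in>W. x w * Bc B1 t w w' * x w') = (1 / (real n1 + t)) *
   ((\<Sum>i\<in>V1. x (Inr i))^2 + 2 * (\<Sum>i\<in>V1. x (Inr i)) * (\<Sum>v\<in>V2. x (Inl v) * rr B1 v)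
    + t * (\<Sum>u\<in>V2. \<Sum>v\<in>V2. x (Inl u) * B1 u v * x (Inl v)))"
  apply (simp add: sum_W Bc_def cong: sum.cong)
  apply (simp add: sum_distrib_left sum_distrib_right power2_eq_square algebra_simps sum.distrib)
  apply (simp add: sum.swap[of _ V1 V2] sum_divide_distrib[symmetric] add_divide_distrib[symmetric] sum.distrib[symmetric])
  apply (simp add: sum_distrib_left[symmetric] algebra_simps)
  done

lemma Bc_feasible: assumes feas1: "theta_feasible G2 B1"
  defines "t \<equiv> (\<Sum>u\<in>V2. \<Sum>v\<in>V2. B1 u v)"
  shows "theta_feasible H (Bc B1 t)" and "(\<Sum>w\<in>W. \<Sum>w'\<in>W. Bc B1 t w w') = real n1 + t"
proof -
  have psd1: "psd_on V2 B1" using feas1 by (simp add: theta_feasible_def)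
  have tr1: "(\<Sum>v\<in>V2. B1 v v) = 1" using feas1 by (simp add: theta_feasible_def)
  have sym1: "\<And>u v. u \<in> V2 \<Longrightarrow> v \<in> V2 \<Longrightarrow> B1 u v = B1 v u" using psd1 by (simp add: psd_on_def)
  have tBil: "t = Bil V2 B1 (\<lambda>_. 1) (\<lambda>_. 1)" unfolding t_def Bil_def by simp
  have tnn: "t \<ge> 0" unfolding tBil by (rule psd_Bil[OF psd1])
  have cpos: "real n1 + t > 0" using tnn n1pos by simp
  have rrsum: "(\<Sum>v\<in>V2. rr B1 v) = t" unfolding rr_def t_def ..
  have form: "0 \<le> (\<Sum>w\<in>W. \<Sum>w'\<in>W. x w * Bc B1 t w w' * x w')" for x
  proof -
    define X where "X = (\<Sum>i\<in>V1. x (Inr i))"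
    define Y where "Y = (\<Sum>v\<in>V2. x (Inl v) * rr B1 v)"
    define q where "q = (\<Sum>u\<in>V2. \<Sum>v\<in>V2. x (Inl u) * B1 u v * x (Inl v))"
    have Yb: "Y = Bil V2 B1 (\<lambda>u. x (Inl u)) (\<lambda>_. 1)" unfolding Y_def Bil_def rr_def
      by (simp add: sum_distrib_left)
    have qb: "q = Bil V2 B1 (\<lambda>u. x (Inl u)) (\<lambda>u. x (Inl u))" unfolding q_def Bil_def by simp
    have cs: "Y^2 \<le> q * t" unfolding Yb qb tBil by (rule Bil_CS[OF psd1])
    have "X^2 + 2 * X * Y + t * q = (X + Y)^2 + (t * q - Y^2)" by (simp add: power2_eq_square algebra_simps)
    also have "\<dots> \<ge> 0" using cs by (simp add: mult.commute)
    finally have "0 \<le> X^2 + 2 * X * Y + t * q" .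
    then show ?thesis unfolding QBc X_def[symmetric] Y_def[symmetric] q_def[symmetric] using cpos by simp
  qed
  show "theta_feasible H (Bc B1 t)"
    unfolding theta_feasible_def psd_on_def
  proof (intro conjI ballI allI impI)
    fix x show "0 \<le> (\<Sum>w\<in>W. \<Sum>w'\<in>W. x w * Bc B1 t w w' * x w')" by (rule form)
  next
    fix w w' assume "w \<in> W" "w' \<in> W"
    then show "Bc B1 t w w' = Bc B1 t w' w" using vH sym1
      by (auto simp: Bc_def split: sum.split)
  next
    show "(\<Sum>w\<in>W. Bc B1 t w w) = 1"
    proof -
      have "(\<Sum>w\<in>W. Bc B1 t w w) = (1 / (real n1 + t)) * (t * (\<Sum>v\<in>V2. B1 v v) + real n1)"
        by (simp add: sum_W Bc_def sum_distrib_left sum_divide_distrib algebra_simps cong: sum.cong)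
      then show ?thesis using tr1 cpos by simp
    qed
  next
    fix w w' assume ww: "w \<in> W" "w' \<in> W" "{w, w'} \<in> edges H"
    show "Bc B1 t w w' = 0"
    proof (cases w)
      case (Inl u) note wu = this
      show ?thesis
      proof (cases w')
        case (Inl v)
        show ?thesis
        proof (cases "u \<in> V2 \<and> v \<in> V2")
          case True
          then have "{u, v} \<in> edges G2" using edge_LL ww(3) wu Inl by auto
          then have "B1 u v = 0" using feas1 True by (simp add: theta_feasible_def)
          then show ?thesis using wu Inl by (simp add: Bc_def)
        qed (use wu Inl in \<open>auto simp: Bc_def\<close>)
      next
        case (Inr j)
        have "{Inr j, Inl u} \<in> edges H" using ww(3) wu Inr by (simp add: insert_commute)
        then obtain v where "v \<in> V1" "Inl u = (Inl v :: 'a + 'a)" using edge_Inr by blast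
        then have "u \<notin> V2" by simp
        then show ?thesis using wu Inr by (simp add: Bc_def)
      qed
    next
      case (Inr i) note wi = this
      show ?thesis
      proof (cases w')
        case (Inl v)
        have "{Inr i, Inl v} \<in> edges H" using ww(3) wi Inl by simp
        then obtain v' where "v' \<in> V1" "Inl v = (Inl v' :: 'a + 'a)" using edge_Inr by blast
        then have "v \<notin> V2" by simp
        then show ?thesis using wi Inl by (simp add: Bc_def)
      next
        case (Inr j)
        then show ?thesis using ww(3) wi edge_RR by simp
      qed
    qed
  qed
  have "(\<Sum>w\<in>W. \<Sum>w'\<in>W. Bc B1 t w w') = (\<Sum>w\<in>W. \<Sum>w'\<in>W. 1 * Bc B1 t w w' * 1)" by simp
  also have "\<dots> = (1 / (real n1 + t)) * ((real n1)^2 + 2 * real n1 * t + t * t)"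
    unfolding QBc by (simp add: t_def rr_def)
  also have "\<dots> = real n1 + t" using cpos by (simp add: field_simps power2_eq_square)
  finally show "(\<Sum>w\<in>W. \<Sum>w'\<in>W. Bc B1 t w w') = real n1 + t" .
qed


end



context nsetup begin

lemma theta_H: "lovasz_theta H = real n1 + th2"
proof -
  obtain B0 where B0: "theta_feasible G2 B0" using exists_feasible[OF fs2 ne2] by blast
  have ub: "lovasz_theta H \<le> real n1 + th2"
    unfolding lovasz_theta_def[of H]
  proof (rule cSup_least)
    show "{\<Sum>i\<in>W. \<Sum>j\<in>W. B i j |B. theta_feasible H B} \<noteq> {}"
      using Bc_feasible(1)[OF B0] by blast
    fix y assume "y \<in> {\<Sum>i\<in>W. \<Sum>j\<in>W. B i j |B. theta_feasible H B}"
    then show "y \<le> real n1 + th2" using UB by blast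
  qed
  have "th2 \<le> lovasz_theta H - real n1"
    unfolding lovasz_theta_def[of G2]
  proof (rule cSup_least)
    show "{\<Sum>i\<in>V2. \<Sum>j\<in>V2. B i j |B. theta_feasible G2 B} \<noteq> {}" using B0 by blast
    fix y assume "y \<in> {\<Sum>i\<in>V2. \<Sum>j\<in>V2. B i j |B. theta_feasible G2 B}"
    then obtain B1 where B1: "theta_feasible G2 B1" "y = (\<Sum>i\<in>V2. \<Sum>j\<in>V2. B1 i j)" by blast
    have "real n1 + y \<le> lovasz_theta H"
      using theta_upper[OF finW Bc_feasible(1)[OF B1(1)]] Bc_feasible(2)[OF B1(1)] B1(2) by simp
    then show "y \<le> lovasz_theta H - real n1" by simp
  qed
  with ub show ?thesis by simp
qed

lemma indep_card_le: assumes "independent_set H S"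
  shows "real (card S) \<le> real n1 + th2"
proof (cases "S = {}")
  case True
  then show ?thesis using theta_ge1[OF fs2 ne2] by simp
next
  case False
  have SW: "S \<subseteq> W" using assms by (simp add: independent_set_def)
  have finS: "finite S" using finite_subset[OF SW finW] .
  define m where "m = real (card S)"
  have mpos: "m > 0" unfolding m_def using finS False by (simp add: card_gt_0_iff)
  define ind where "ind w = (if w \<in> S then 1 else (0::real))" for w
  define BS where "BS w w' = ind w * ind w' / m" for w w'
  have sumS: "(\<Sum>w\<in>W. ind w * g w) = (\<Sum>w\<in>S. g w)" for g
  proof -
    have "(\<Sum>w\<in>W. ind w * g w) = (\<Sum>w\<in>W. if w \<in> S then g w else 0)"
      unfolding ind_def by (intro sum.cong) auto
    also have "\<dots> = (\<Sum>w\<in>S. g w)" using finW SW by (simp add: sum.If_cases Int_absorb1)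
    finally show ?thesis .
  qed
  have form: "(\<Sum>w\<in>W. \<Sum>w'\<in>W. x w * BS w w' * x w') = (\<Sum>w\<in>S. x w)^2 / m" for x
  proof -
    have "(\<Sum>w\<in>W. \<Sum>w'\<in>W. x w * BS w w' * x w') = (\<Sum>w\<in>W. ind w * (\<Sum>w'\<in>W. ind w' * (x w * x w' / m)))"
      unfolding BS_def by (simp add: sum_distrib_left algebra_simps)
    also have "\<dots> = (\<Sum>w\<in>S. \<Sum>w'\<in>S. x w * x w' / m)" unfolding sumS ..
    also have "\<dots> = (\<Sum>w\<in>S. x w)^2 / m"
      by (simp add: power2_eq_square sum_product sum_divide_distrib)
    finally show ?thesis .
  qed
  have feas: "theta_feasible H BS"
    unfolding theta_feasible_def psd_on_def
  proof (intro conjI ballI allI impI)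
    fix x show "0 \<le> (\<Sum>w\<in>W. \<Sum>w'\<in>W. x w * BS w w' * x w')" unfolding form using mpos by simp
  next
    fix i j show "BS i j = BS j i" unfolding BS_def by (simp add: mult.commute)
  next
    have "(\<Sum>w\<in>W. BS w w) = (\<Sum>w\<in>W. ind w * (1 / m))" unfolding BS_def ind_def by (intro sum.cong) auto
    also have "\<dots> = 1" unfolding sumS using mpos by (simp add: m_def)
    finally show "(\<Sum>w\<in>W. BS w w) = 1" .
  next
    fix i j assume "i \<in> W" "j \<in> W" "{i, j} \<in> edges H"
    then have "\<not> (i \<in> S \<and> j \<in> S)" using assms by (auto simp: independent_set_def)
    then show "BS i j = 0" unfolding BS_def ind_def by auto
  qed
  have "(\<Sum>w\<in>W. \<Sum>w'\<in>W. BS w w') = m"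
    using form[of "\<lambda>_. 1"] mpos by (simp add: m_def power2_eq_square)
  then show ?thesis using theta_upper[OF finW feas] theta_H m_def by simp
qed

lemma alpha_H: assumes "real (alpha G2) = th2" shows "alpha H = n1 + alpha G2"
proof -
  have fin2s: "finite {card S |S. independent_set G2 S}"
  proof (rule finite_subset)
    show "{card S |S. independent_set G2 S} \<subseteq> card ` Pow V2" by (auto simp: independent_set_def)
  qed (use fin2 in simp)
  have "alpha G2 \<in> {card S |S. independent_set G2 S}"
    unfolding alpha_def by (rule Max_in[OF fin2s]) (auto simp: independent_set_def)
  then obtain S2 where S2: "independent_set G2 S2" "card S2 = alpha G2" by auto
  define S where "S = Inr ` V1 \<union> Inl ` S2"
  have S2V: "S2 \<subseteq> V2" using S2 by (simp add: independent_set_def)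
  have finS2: "finite S2" using finite_subset[OF S2V fin2] .
  have indS: "independent_set H S"
    unfolding independent_set_def
  proof (intro conjI ballI)
    show "S \<subseteq> W" unfolding S_def using vH S2V by auto
    fix a b assume ab: "a \<in> S" "b \<in> S"
    show "{a, b} \<notin> edges H"
    proof
      assume e: "{a, b} \<in> edges H"
      show False
      proof (cases a)
        case (Inl u) note au = this
        then have u: "u \<in> S2" using ab(1) unfolding S_def by auto
        show False
        proof (cases b)
          case (Inl v)
          then have v: "v \<in> S2" using ab(2) unfolding S_def by auto
          have "{u, v} \<in> edges G2" using edge_LL[of u v] e au Inl u v S2V by auto
          then show False using S2(1) u v by (auto simp: independent_set_def)
        next
          case (Inr j)
          have "{Inr j, Inl u} \<in> edges H" using e au Inr by (simp add: insert_commute)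
          then obtain v where "v \<in> V1" "Inl u = (Inl v :: 'a + 'a)" using edge_Inr by blast
          then show False using u S2V by auto
        qed
      next
        case (Inr i) note ai = this
        show False
        proof (cases b)
          case (Inl v)
          then have v: "v \<in> S2" using ab(2) unfolding S_def by auto
          have "{Inr i, Inl v} \<in> edges H" using e ai Inl by simp
          then obtain v' where "v' \<in> V1" "Inl v = (Inl v' :: 'a + 'a)" using edge_Inr by blast
          then show False using v S2V by auto
        next
          case (Inr j)
          then show False using e ai edge_RR by simp
        qed
      qed
    qed
  qed
  have cardS: "card S = n1 + alpha G2"
    unfolding S_def using fin1 finS2 S2(2)
    by (subst card_Un_disjoint) (auto simp: card_image)
  have finHs: "finite {card S |S. independent_set H S}"
  proof (rule finite_subset)
    show "{card S |S. independent_set H S} \<subseteq> card ` Pow W" by (auto simp: independent_set_def)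
  qed (use finW in simp)
  show ?thesis
    unfolding alpha_def[of H]
  proof (rule Max_eqI[OF finHs])
    fix y assume "y \<in> {card S |S. independent_set H S}"
    then obtain T where T: "independent_set H T" "y = card T" by blast
    have "real (card T) \<le> real n1 + real (alpha G2)" using indep_card_le[OF T(1)] assms by simp
    then show "y \<le> n1 + alpha G2" using T(2) by linarith
  next
    show "n1 + alpha G2 \<in> {card S |S. independent_set H S}" using indS cardS by force
  qed
qed

end



lemma NS_setup:
  assumes "finite_simple_graph G1" "finite_simple_graph G2" "edges G1 \<noteq> {}" "edges G2 \<noteq> {}"
    "verts G1 \<inter> verts G2 = {}" "regular G1"
  shows "\<exists>X N k. nsetup G1 G2 (graph_NS G1 G2) X N k"
proof -
  let ?V1 = "verts G1" and ?E1 = "edges G1"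
  define N where "N i = {j \<in> ?V1. {i, j} \<in> ?E1}" for i
  obtain k where k: "\<forall>v\<in>?V1. degree G1 v = k" using assms(6) by (auto simp: regular_def)
  have fin1: "finite ?V1" using assms(1) by (simp add: finite_simple_graph_def)
  have Nc: "card (N i) = k" if "i \<in> ?V1" for i
  proof -
    have "N i = {u \<in> ?V1. {u, i} \<in> ?E1}" unfolding N_def by (auto simp: insert_commute)
    then show ?thesis using k that by (simp add: degree_def)
  qed
  obtain e where e: "e \<in> ?E1" using assms(3) by blast
  then obtain u v where uv: "e = {u, v}" "u \<in> ?V1" "v \<in> ?V1" using simple_edge[OF assms(1) e] by blast
  have "v \<in> N u" unfolding N_def using uv e by simp
  moreover have "finite (N u)" unfolding N_def using fin1 by simp
  ultimately have "card (N u) > 0" by (auto simp: card_gt_0_iff)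
  then have kpos: "k > 0" using Nc[OF uv(2)] by simp
  have ne2: "verts G2 \<noteq> {}"
  proof -
    obtain e2 where "e2 \<in> edges G2" using assms(4) by blast
    then show ?thesis using simple_edge[OF assms(2)] by blast
  qed
  have "nsetup G1 G2 (graph_NS G1 G2) {{Inr u, Inl v} | u v. u \<in> ?V1 \<and> v \<in> ?V1 \<and> {u, v} \<in> ?E1} N k"
  proof (unfold_locales)
    show "verts (graph_NS G1 G2) = Inl ` (verts G1 \<union> verts G2) \<union> Inr ` verts G1"
      by (simp add: graph_NS_def graph_join_def verts_def)
    show "edges (graph_NS G1 G2) = (`) Inl ` edges (graph_join G1 G2) \<union> {{Inr u, Inl v} | u v. u \<in> ?V1 \<and> v \<in> ?V1 \<and> {u, v} \<in> ?E1}"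
      by (simp add: graph_NS_def edges_def)
    show "{{Inr u, Inl v} | u v. u \<in> ?V1 \<and> v \<in> ?V1 \<and> {u, v} \<in> ?E1} \<subseteq> {{Inr u, Inl v} |u v. u \<in> verts G1 \<and> v \<in> verts G1}"
      by blast
    show "\<And>i. i \<in> verts G1 \<Longrightarrow> N i \<subseteq> verts G1" unfolding N_def by auto
    show "\<And>i. i \<in> verts G1 \<Longrightarrow> card (N i) = k" by (rule Nc)
    show "\<And>i j. i \<in> verts G1 \<Longrightarrow> j \<in> verts G1 \<Longrightarrow> (j \<in> N i) = (i \<in> N j)"
      unfolding N_def by (auto simp: insert_commute)
    show "{Inr j, Inl i} \<in> {{Inr u, Inl v} | u v. u \<in> ?V1 \<and> v \<in> ?V1 \<and> {u, v} \<in> ?E1}"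
      if "i \<in> verts G1" "j \<in> N i" for i j
    proof -
      have "j \<in> ?V1" "{j, i} \<in> ?E1" using that unfolding N_def by (auto simp: insert_commute)
      then show ?thesis using that(1) by blast
    qed
    show "0 < k" by (rule kpos)
    show "verts G1 \<noteq> {}" using uv by blast
    show "verts G2 \<noteq> {}" by (rule ne2)
  qed (use assms in auto)
  then show ?thesis by blast
qed

lemma NNS_setup:
  assumes "finite_simple_graph G1" "finite_simple_graph G2" "edges G1 \<noteq> {}" "edges G2 \<noteq> {}"
    "verts G1 \<inter> verts G2 = {}" "regular G1" "\<not> complete_graph G1"
  shows "\<exists>X N k. nsetup G1 G2 (graph_NNS G1 G2) X N k"
proof -
  let ?V1 = "verts G1" and ?E1 = "edges G1"
  define D where "D i = {j \<in> ?V1. {i, j} \<in> ?E1}" for i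
  define N where "N i = {j \<in> ?V1. j \<noteq> i \<and> {i, j} \<notin> ?E1}" for i
  obtain k where k: "\<forall>v\<in>?V1. degree G1 v = k" using assms(6) by (auto simp: regular_def)
  have fin1: "finite ?V1" using assms(1) by (simp add: finite_simple_graph_def)
  have Dc: "card (D i) = k" if "i \<in> ?V1" for i
  proof -
    have "D i = {u \<in> ?V1. {u, i} \<in> ?E1}" unfolding D_def by (auto simp: insert_commute)
    then show ?thesis using k that by (simp add: degree_def)
  qed
  have Nc: "card (N i) = card ?V1 - 1 - k" if i: "i \<in> ?V1" for i
  proof -
    have DV: "D i \<subseteq> ?V1 - {i}" unfolding D_def using simple_noloop[OF assms(1), of i] by auto
    have "N i = (?V1 - {i}) - D i" unfolding N_def D_def by auto
    then have "card (N i) = card (?V1 - {i}) - card (D i)"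
      using DV fin1 by (simp add: card_Diff_subset finite_subset)
    then show ?thesis using Dc[OF i] i fin1 by simp
  qed
  obtain u v where uv: "u \<in> ?V1" "v \<in> ?V1" "u \<noteq> v" "{u, v} \<notin> ?E1"
    using assms(7) by (auto simp: complete_graph_def)
  have "v \<in> N u" unfolding N_def using uv by simp
  moreover have "finite (N u)" unfolding N_def using fin1 by simp
  ultimately have "card (N u) > 0" by (auto simp: card_gt_0_iff)
  then have kpos: "card ?V1 - 1 - k > 0" using Nc[OF uv(1)] by simp
  have ne2: "verts G2 \<noteq> {}"
  proof -
    obtain e2 where "e2 \<in> edges G2" using assms(4) by blast
    then show ?thesis using simple_edge[OF assms(2)] by blast
  qed
  have "nsetup G1 G2 (graph_NNS G1 G2) {{Inr u, Inl v} | u v. u \<in> ?V1 \<and> v \<in> ?V1 \<and> u \<noteq> v \<and> {u, v} \<notin> ?E1} N (card ?V1 - 1 - k)"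
  proof (unfold_locales)
    show "verts (graph_NNS G1 G2) = Inl ` (verts G1 \<union> verts G2) \<union> Inr ` verts G1"
      by (simp add: graph_NNS_def graph_join_def verts_def)
    show "edges (graph_NNS G1 G2) = (`) Inl ` edges (graph_join G1 G2) \<union> {{Inr u, Inl v} | u v. u \<in> ?V1 \<and> v \<in> ?V1 \<and> u \<noteq> v \<and> {u, v} \<notin> ?E1}"
      by (simp add: graph_NNS_def edges_def)
    show "{{Inr u, Inl v} | u v. u \<in> ?V1 \<and> v \<in> ?V1 \<and> u \<noteq> v \<and> {u, v} \<notin> ?E1} \<subseteq> {{Inr u, Inl v} |u v. u \<in> verts G1 \<and> v \<in> verts G1}"
      by blast
    show "\<And>i. i \<in> verts G1 \<Longrightarrow> N i \<subseteq> verts G1" unfolding N_def by auto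
    show "\<And>i. i \<in> verts G1 \<Longrightarrow> card (N i) = card ?V1 - 1 - k" by (rule Nc)
    show "\<And>i j. i \<in> verts G1 \<Longrightarrow> j \<in> verts G1 \<Longrightarrow> (j \<in> N i) = (i \<in> N j)"
      unfolding N_def by (auto simp: insert_commute)
    show "{Inr j, Inl i} \<in> {{Inr u, Inl v} | u v. u \<in> ?V1 \<and> v \<in> ?V1 \<and> u \<noteq> v \<and> {u, v} \<notin> ?E1}"
      if "i \<in> verts G1" "j \<in> N i" for i j
    proof -
      have "j \<in> ?V1" "j \<noteq> i" "{j, i} \<notin> ?E1" using that unfolding N_def by (auto simp: insert_commute)
      then show ?thesis using that(1) by blast
    qed
    show "0 < card ?V1 - 1 - k" by (rule kpos)
    show "verts G1 \<noteq> {}" using uv by blast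
    show "verts G2 \<noteq> {}" by (rule ne2)
  qed (use assms in auto)
  then show ?thesis by blast
qed

theorem mainTheorem6:
  fixes G1 G2 :: "'a graph"
  assumes "finite_simple_graph G1" and "finite_simple_graph G2"
    and "\<not> complete_graph G1" and "\<not> complete_graph G2"
    and "edges G1 \<noteq> {}" and "edges G2 \<noteq> {}"
    and "verts G1 \<inter> verts G2 = {}"
    and "regular G1"
  shows "lovasz_theta (graph_NS G1 G2) = real (card (verts G1)) + lovasz_theta G2
    \<and> lovasz_theta (graph_NNS G1 G2) = real (card (verts G1)) + lovasz_theta G2
    \<and> (real (alpha G2) = lovasz_theta G2 \<longrightarrow>
         alpha (graph_NS G1 G2) = card (verts G1) + alpha G2
       \<and> alpha (graph_NNS G1 G2) = card (verts G1) + alpha G2)"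
proof -
  obtain X N k where A: "nsetup G1 G2 (graph_NS G1 G2) X N k"
    using NS_setup[OF assms(1,2,5,6,7,8)] by blast
  obtain X' N' k' where B: "nsetup G1 G2 (graph_NNS G1 G2) X' N' k'"
    using NNS_setup[OF assms(1,2,5,6,7,8,3)] by blast
  show ?thesis
    using nsetup.theta_H[OF A] nsetup.theta_H[OF B] nsetup.alpha_H[OF A] nsetup.alpha_H[OF B] by simp
qed



end
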